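(* Let $\mathbf{b}\in H_{1,2,2}$ have odd norm. Let $U$ be the set of the twelve residue classes modulo $2H_{1,2,2}$ of the elements $\mathbf{v}_1,\mathbf{v}_2,\mathbf{v}_3,\mathbf{v}_4,\mathbf{v}_3-\mathbf{v}_1,\mathbf{v}_3-\mathbf{v}_2,\mathbf{v}_4-\mathbf{v}_3,\mathbf{v}_4-\mathbf{v}_1,\mathbf{v}_4-\mathbf{v}_2,\mathbf{v}_3-\mathbf{v}_2-\mathbf{v}_1,\mathbf{v}_4-\mathbf{v}_2-\mathbf{v}_1,\mathbf{v}_4+\mathbf{v}_3-\mathbf{v}_2-\mathbf{v}_1$. Then the map $\mathbf{x}\mapsto \mathbf{b}\mathbf{x}$ induces a permutation of $U$, and so does the map $\mathbf{x}\mapsto\mathbf{x}\mathbf{b}$.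
   Context: Let $\mathbf{i},\mathbf{j},\mathbf{k}$ be the standard quaternion units; $\overline{\mathbf{q}}$ is quaternion conjugation and $N(\mathbf{q})=\mathbf{q}\overline{\mathbf{q}}$. $H_{1,2,2}$ is the subring of the quaternions equal to the $\mathbb{Z}$-module generated by $\mathbf{v}_1=1$, $\mathbf{v}_2=\mathbf{i}$, $\mathbf{v}_3=\tfrac12(1+\mathbf{i}+\sqrt2\,\mathbf{j})$, $\mathbf{v}_4=\tfrac12(1+\mathbf{i}+\sqrt2\,\mathbf{k})$. The 24 units (elements of norm 1) of $H_{1,2,2}$ are $\pm$ the twelve elements listed in the claim. *)

theory Defs
  imports Complex_Main
begin

datatype quat = Quat (qRe: real) (qI: real) (qJ: real) (qK: real)

instantiation quat :: "{zero, one, plus, minus, uminus, times}"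
begin
definition "0 = Quat 0 0 0 0"
definition "1 = Quat 1 0 0 0"
definition "p + q = Quat (qRe p + qRe q) (qI p + qI q) (qJ p + qJ q) (qK p + qK q)"
definition "p - q = Quat (qRe p - qRe q) (qI p - qI q) (qJ p - qJ q) (qK p - qK q)"
definition "- q = Quat (- qRe q) (- qI q) (- qJ q) (- qK q)"
definition "p * q = Quat
   (qRe p * qRe q - qI p * qI q - qJ p * qJ q - qK p * qK q)
   (qRe p * qI q + qI p * qRe q + qJ p * qK q - qK p * qJ q)
   (qRe p * qJ q - qI p * qK q + qJ p * qRe q + qK p * qI q)
   (qRe p * qK q + qI p * qJ q - qJ p * qI q + qK p * qRe q)"
instance ..
end

definition qreal :: "real \<Rightarrow> quat" where "qreal r = Quat r 0 0 0"

definition qi :: quat where "qi = Quat 0 1 0 0"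
definition qj :: quat where "qj = Quat 0 0 1 0"
definition qk :: quat where "qk = Quat 0 0 0 1"

definition qconj :: "quat \<Rightarrow> quat" where
  "qconj q = Quat (qRe q) (- qI q) (- qJ q) (- qK q)"

definition qN :: "quat \<Rightarrow> quat" where "qN q = q * qconj q"

definition v1 :: quat where "v1 = 1"
definition v2 :: quat where "v2 = qi"
definition v3 :: quat where "v3 = qreal (1/2) * (1 + qi + qreal (sqrt 2) * qj)"
definition v4 :: quat where "v4 = qreal (1/2) * (1 + qi + qreal (sqrt 2) * qk)"

definition H122 :: "quat set" where
  "H122 = {qreal (of_int a) * v1 + qreal (of_int b) * v2 + qreal (of_int c) * v3
            + qreal (of_int d) * v4 | a b c d :: int. True}"

definition twoH :: "quat set" where
  "twoH = {qreal 2 * h | h. h \<in> H122}"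

definition cls :: "quat \<Rightarrow> quat set" where
  "cls x = {y \<in> H122. x - y \<in> twoH}"

definition Ucls :: "quat set set" where
  "Ucls = cls ` {v1, v2, v3, v4, v3 - v1, v3 - v2, v4 - v3, v4 - v1, v4 - v2,
                 v3 - v2 - v1, v4 - v2 - v1, v4 + v3 - v2 - v1}"

end

theory Submission
  imports Defs
begin

type_synonym i4 = "int \<times> int \<times> int \<times> int"

definition emb :: "i4 \<Rightarrow> quat" where
  "emb x = (case x of (a,b,c,d) \<Rightarrow>
     Quat (a + (c+d)/2) (b + (c+d)/2) (c * sqrt 2 / 2) (d * sqrt 2 / 2))"

definition pmul :: "i4 \<Rightarrow> i4 \<Rightarrow> i4" where
  "pmul x y = (case x of (a,b,c,d) \<Rightarrow> case y of (e,f,g,h) \<Rightarrow>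
     (a*e - b*f - b*g - c*g - d*f - d*g - d*h,
      a*f + b*e + b*h + c*f + c*h - d*g,
      a*g - b*h + c*e + c*g + d*f + d*g,
      a*h + b*g - c*f + d*e + d*g + d*h))"

definition par :: "i4 \<Rightarrow> i4" where
  "par x = (case x of (a,b,c,d) \<Rightarrow> (a mod 2, b mod 2, c mod 2, d mod 2))"

definition nrm :: "i4 \<Rightarrow> int" where
  "nrm x = (case x of (a,b,c,d) \<Rightarrow> a^2+b^2+(a+b)*(c+d)+c^2+d^2+c*d)"

lemma s2: "sqrt 2 * sqrt 2 = (2::real)" by simp

lemma emb_lin: "qreal (of_int a) * v1 + qreal (of_int b) * v2 + qreal (of_int c) * v3
            + qreal (of_int d) * v4 = emb (a,b,c,d)"
  by (simp add: emb_def qreal_def v1_def v2_def v3_def v4_def qi_def qj_def qk_def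
      times_quat_def plus_quat_def one_quat_def algebra_simps add_divide_distrib)

lemma H122_eq: "H122 = range emb"
proof -
  have "H122 = {emb (a,b,c,d) | a b c d. True}" unfolding H122_def emb_lin ..
  also have "\<dots> = range emb" by auto
  finally show ?thesis .
qed

lemma gen: "(s::real) * s = 2 \<Longrightarrow>
   Quat (a + (c+d)/2) (b + (c+d)/2) (c * s / 2) (d * s / 2) *
   Quat (e + (g+h)/2) (f + (g+h)/2) (g * s / 2) (h * s / 2) =
   Quat ((a*e - b*f - b*g - c*g - d*f - d*g - d*h) + ((a*g - b*h + c*e + c*g + d*f + d*g) + (a*h + b*g - c*f + d*e + d*g + d*h))/2)
        ((a*f + b*e + b*h + c*f + c*h - d*g) + ((a*g - b*h + c*e + c*g + d*f + d*g) + (a*h + b*g - c*f + d*e + d*g + d*h))/2)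
        ((a*g - b*h + c*e + c*g + d*f + d*g) * s / 2) ((a*h + b*g - c*f + d*e + d*g + d*h) * s / 2)"
  unfolding times_quat_def quat.sel quat.inject
  by (intro conjI; simp add: field_simps)

lemma emb_mul: "emb x * emb y = emb (pmul x y)"
proof -
  obtain a b c d where x: "x = (a,b,c,d)" by (cases x) auto
  obtain e f g h where y: "y = (e,f,g,h)" by (cases y) auto
  show ?thesis
    unfolding x y emb_def pmul_def prod.case
    by (rule trans[OF gen[OF s2]]) simp
qed

lemma emb_inj: "emb x = emb y \<Longrightarrow> x = y"
  by (cases x; cases y) (auto simp: emb_def)

lemma emb_diff: "emb x - emb y = emb (case x of (a,b,c,d) \<Rightarrow> case y of (e,f,g,h) \<Rightarrow> (a-e,b-f,c-g,d-h))"
  by (cases x; cases y) (simp add: emb_def minus_quat_def field_simps)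

lemma emb_2: "qreal 2 * emb z = emb (case z of (a,b,c,d) \<Rightarrow> (2*a,2*b,2*c,2*d))"
  by (cases z) (simp add: emb_def qreal_def times_quat_def field_simps)

lemma twoH_eq: "twoH = {emb (case z of (a,b,c,d) \<Rightarrow> (2*a,2*b,2*c,2*d)) | z. True}"
  unfolding twoH_def H122_eq emb_2[symmetric] by auto

lemma mod2_eq: "((a::int) mod 2 = b mod 2) = (\<exists>k. a - b = 2 * k)"
  by (metis dvd_def mod_eq_dvd_iff)

lemma emb_eq: "(emb x = emb y) = (x = y)"
  by (cases x; cases y) (auto simp: emb_def)

lemma diff_twoH: "(emb x - emb y \<in> twoH) = (par x = par y)"
proof -
  obtain a b c d where x: "x = (a,b,c,d)" by (cases x) auto
  obtain e f g h where y: "y = (e,f,g,h)" by (cases y) auto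
  have "(emb x - emb y \<in> twoH) = (\<exists>z. (a-e,b-f,c-g,d-h) = (case z of (a,b,c,d) \<Rightarrow> (2*a,2*b,2*c,2*d)))"
    unfolding twoH_eq emb_diff x y prod.case by (simp add: emb_eq)
  also have "\<dots> = (\<exists>k1 k2 k3 k4. a-e = 2*k1 \<and> b-f = 2*k2 \<and> c-g = 2*k3 \<and> d-h = 2*k4)"
    by auto
  also have "\<dots> = (par x = par y)"
    unfolding x y par_def prod.case prod.inject mod2_eq by blast
  finally show ?thesis .
qed

lemma cls_emb: "cls (emb x) = emb ` {y. par y = par x}"
  unfolding cls_def H122_eq by (auto simp: diff_twoH simp del: prod.collapse split del: prod.split)

lemma cls_emb_eq: "(cls (emb x) = cls (emb y)) = (par x = par y)"
proof
  assume "cls (emb x) = cls (emb y)"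
  moreover have "emb x \<in> cls (emb x)" unfolding cls_emb by auto
  ultimately have "emb x \<in> cls (emb y)" by simp
  then show "par x = par y" unfolding cls_emb by (auto simp: emb_eq)
qed (simp add: cls_emb)

lemma par_par: "par (par x) = par x"
  by (cases x) (simp add: par_def)

lemma par_pmul: "par (pmul x y) = par (pmul (par x) (par y))"
  by (cases x; cases y) (simp only: par_def pmul_def prod.case prod.inject;
      intro conjI mod_add_cong mod_diff_cong mod_mult_cong; simp)

lemma par_pmul1: "par (pmul x y) = par (pmul (par x) y)"
  by (metis par_pmul par_par)

lemma par_pmul2: "par (pmul x y) = par (pmul x (par y))"
  by (metis par_pmul par_par)

lemma qN_emb: "qN (emb x) = qreal (of_int (nrm x))"
proof -
  obtain a b c d where x: "x = (a,b,c,d)" by (cases x) auto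
  have gen: "(s::real) * s = 2 \<Longrightarrow> qN (Quat (a + (c+d)/2) (b + (c+d)/2) (c * s / 2) (d * s / 2))
     = Quat (a^2+b^2+(a+b)*(c+d)+c^2+d^2+c*d) 0 0 0" for a b c d s
    unfolding qN_def qconj_def times_quat_def quat.sel quat.inject
    by (intro conjI; simp add: field_simps power2_eq_square)
  show ?thesis unfolding x emb_def prod.case nrm_def qreal_def
    by (rule trans[OF gen[OF s2]]) simp
qed

lemma odd_nrm_par: "odd (nrm x) = odd (nrm (par x))"
proof -
  have "nrm x mod 2 = nrm (par x) mod 2"
    by (cases x) (simp only: par_def nrm_def prod.case power2_eq_square;
      intro conjI mod_add_cong mod_diff_cong mod_mult_cong; simp)
  then show ?thesis by (simp add: even_iff_mod_2_eq_zero)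
qed

definition Upar :: "i4 set" where
  "Upar = {(1,0,0,0),(0,1,0,0),(0,0,1,0),(0,0,0,1),(1,0,1,0),(0,1,1,0),(0,0,1,1),(1,0,0,1),
           (0,1,0,1),(1,1,1,0),(1,1,0,1),(1,1,1,1)}"

lemma emb_add: "emb x + emb y = emb (case x of (a,b,c,d) \<Rightarrow> case y of (e,f,g,h) \<Rightarrow> (a+e,b+f,c+g,d+h))"
  by (cases x; cases y) (simp add: emb_def plus_quat_def field_simps)

lemma vs: "v1 = emb (1,0,0,0)" "v2 = emb (0,1,0,0)" "v3 = emb (0,0,1,0)" "v4 = emb (0,0,0,1)"
  by (simp_all add: emb_def v1_def v2_def v3_def v4_def one_quat_def qi_def qj_def qk_def
      qreal_def times_quat_def plus_quat_def)

lemma cls_par: "cls (emb (par u)) = cls (emb u)"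
  by (simp add: cls_emb_eq par_par)

lemma Ucls_eq: "Ucls = (\<lambda>u. cls (emb u)) ` Upar"
proof -
  have "Ucls = (\<lambda>u. cls (emb u)) ` {(1,0,0,0),(0,1,0,0),(0,0,1,0),(0,0,0,1),(-1,0,1,0),(0,-1,1,0),
     (0,0,-1,1),(-1,0,0,1),(0,-1,0,1),(-1,-1,1,0),(-1,-1,0,1),(-1,-1,1,1)}"
    unfolding Ucls_def vs emb_diff emb_add by simp
  also have "\<dots> = (\<lambda>u. cls (emb u)) ` (par ` {(1,0,0,0),(0,1,0,0),(0,0,1,0),(0,0,0,1),(-1,0,1,0),(0,-1,1,0),
     (0,0,-1,1),(-1,0,0,1),(0,-1,0,1),(-1,-1,1,0),(-1,-1,0,1),(-1,-1,1,1)})"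
    unfolding image_image cls_par ..
  also have "par ` {(1,0,0,0),(0,1,0,0),(0,0,1,0),(0,0,0,1),(-1,0,1,0),(0,-1,1,0),
     (0,0,-1,1),(-1,0,0,1),(0,-1,0,1),(-1,-1,1,0),(-1,-1,0,1),(-1,-1,1,1)} = Upar"
    by (simp add: par_def Upar_def insert_commute)
  finally show ?thesis .
qed

lemma fin:
  assumes "a \<in> {0,1}" "b \<in> {0,1}" "c \<in> {0,1}" "d \<in> {0,1}" "odd (nrm (a,b,c,d))"
  shows "(\<lambda>u. par (pmul (a,b,c,d) u)) ` Upar = Upar \<and> (\<lambda>u. par (pmul u (a,b,c,d))) ` Upar = Upar"
  using assms unfolding insert_iff empty_iff simp_thms
  by (elim disjE; simp add: Upar_def pmul_def par_def nrm_def set_eq_subset)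

lemma generic:
  fixes op :: "quat \<Rightarrow> quat" and pm :: "i4 \<Rightarrow> i4"
  assumes op_emb: "\<And>u. op (emb u) = emb (pm u)"
    and pm_par: "\<And>u. par (pm u) = par (pm (par u))"
    and perm: "(\<lambda>u. par (pm u)) ` Upar = Upar"
  shows "\<exists>f. bij_betw f Ucls Ucls \<and> (\<forall>x\<in>H122. cls x \<in> Ucls \<longrightarrow> f (cls x) = cls (op x))"
proof -
  define f where "f C = cls (op (SOME x. x \<in> H122 \<and> cls x = C))" for C
  have key: "f (cls x) = cls (op x)" if xH: "x \<in> H122" for x
  proof -
    define y where "y = (SOME y. y \<in> H122 \<and> cls y = cls x)"
    have "y \<in> H122 \<and> cls y = cls x" unfolding y_def by (rule someI[of _ x]) (simp add: xH)
    then have yH: "y \<in> H122" and cy: "cls y = cls x" by auto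
    obtain u where u: "x = emb u" using xH unfolding H122_eq by auto
    obtain v where v: "y = emb v" using yH unfolding H122_eq by auto
    have "par v = par u" using cy unfolding u v cls_emb_eq .
    then have "par (pm v) = par (pm u)" using pm_par by metis
    then have "cls (op y) = cls (op x)" unfolding u v op_emb cls_emb_eq .
    then show ?thesis unfolding f_def y_def[symmetric] .
  qed
  have img: "f ` Ucls = Ucls"
  proof -
    have "f ` Ucls = (\<lambda>u. cls (emb (pm u))) ` Upar"
      unfolding Ucls_eq image_image using key[of "emb _"] op_emb by (simp add: H122_eq)
    also have "\<dots> = (\<lambda>u. cls (emb (par (pm u)))) ` Upar" unfolding cls_par ..
    also have "\<dots> = (\<lambda>w. cls (emb w)) ` ((\<lambda>u. par (pm u)) ` Upar)" unfolding image_image ..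
    also have "\<dots> = Ucls" unfolding perm Ucls_eq ..
    finally show ?thesis .
  qed
  have fin: "finite Ucls" unfolding Ucls_def by simp
  have "inj_on f Ucls" using fin img by (intro eq_card_imp_inj_on) simp_all
  then have "bij_betw f Ucls Ucls" using img unfolding bij_betw_def by simp
  then show ?thesis using key by blast
qed

lemma mod2_01: "(a::int) mod 2 \<in> {0,1}" by auto

theorem lemma8:
  assumes b_in: "b \<in> H122"
    and odd_norm: "\<exists>n::int. odd n \<and> qN b = qreal (of_int n)"
  shows "(\<exists>f. bij_betw f Ucls Ucls \<and>
            (\<forall>x\<in>H122. cls x \<in> Ucls \<longrightarrow> f (cls x) = cls (b * x)))
       \<and> (\<exists>g. bij_betw g Ucls Ucls \<and>
            (\<forall>x\<in>H122. cls x \<in> Ucls \<longrightarrow> g (cls x) = cls (x * b)))"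
proof -
  obtain \<beta> where b: "b = emb \<beta>" using b_in unfolding H122_eq by auto
  obtain n :: int where n: "odd n" "qN b = qreal (of_int n)" using odd_norm by auto
  have "qreal (of_int n) = qreal (of_int (nrm \<beta>))" using n(2) unfolding b qN_emb by simp
  then have "n = nrm \<beta>" by (simp add: qreal_def)
  then have oddp: "odd (nrm (par \<beta>))" using n(1) odd_nrm_par by simp
  obtain c1 c2 c3 c4 where bt: "\<beta> = (c1,c2,c3,c4)" by (cases \<beta>) auto
  have pb: "par \<beta> = (c1 mod 2, c2 mod 2, c3 mod 2, c4 mod 2)" by (simp add: bt par_def)
  note F = fin[OF mod2_01 mod2_01 mod2_01 mod2_01 oddp[unfolded pb], folded pb]
  have eL: "(\<lambda>u. par (pmul \<beta> u)) = (\<lambda>u. par (pmul (par \<beta>) u))"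
    by (rule ext) (rule par_pmul1)
  have eR: "(\<lambda>u. par (pmul u \<beta>)) = (\<lambda>u. par (pmul u (par \<beta>)))"
    by (rule ext) (rule par_pmul2)
  have L: "(\<lambda>u. par (pmul \<beta> u)) ` Upar = Upar"
    unfolding eL using F by simp
  have R: "(\<lambda>u. par (pmul u \<beta>)) ` Upar = Upar"
    unfolding eR using F by simp
  show ?thesis
  proof
    show "\<exists>f. bij_betw f Ucls Ucls \<and> (\<forall>x\<in>H122. cls x \<in> Ucls \<longrightarrow> f (cls x) = cls (b * x))"
      by (rule generic[of "\<lambda>x. b * x" "pmul \<beta>", OF _ par_pmul2 L]) (simp add: b emb_mul)
    show "\<exists>g. bij_betw g Ucls Ucls \<and> (\<forall>x\<in>H122. cls x \<in> Ucls \<longrightarrow> g (cls x) = cls (x * b))"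
      by (rule generic[of "\<lambda>x. x * b" "\<lambda>u. pmul u \<beta>", OF _ par_pmul1 R]) (simp add: b emb_mul)
  qed
qed

end
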